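(* Let $\phi$ be an injective endomorphism of a finitely generated free group $F$ and let $W\in\partial F$ be an attracting fixed word of $\phi$. Then there exists an integer $i_0$ such that $|W\wedge\phi(W')|>|W\wedge W'|$ for every $W'\in\bar F=F\sqcup\partial F$ with $|W\wedge W'|\ge i_0$.
   Context: Fix a basis of $F$; elements of $F$ are reduced words, $|W|$ is word length, $\partial F$ is the set of infinite reduced words $W=w_1w_2\cdots$ with $W_i=w_1\cdots w_i$, and $W\wedge V$ is the longest common initial segment of $W,V\in\bar F$. $\phi$ extends continuously and injectively to $\bar F$ (on $\partial F$, $\phi(W)=\lim_i\phi(W_i)$). A fixed infinite word $W$ ($\phi(W)=W$) is an attracting fixed word if $\lim_{i\to\infty}(|W\wedge\phi(W_i)|-i)=+\infty$. *)

theory Defs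
  imports Complex_Main "HOL-Library.Extended_Nat"
begin

text \<open>Free group F of rank n on generators 0..n-1. A letter is (i, True) for the
generator a_i and (i, False) for its inverse.\<close>

type_synonym letter = "nat \<times> bool"

definition linv :: "letter \<Rightarrow> letter" where
  "linv x = (fst x, \<not> snd x)"

definition letters :: "nat \<Rightarrow> letter set" where
  "letters n = {x. fst x < n}"

fun reduced :: "letter list \<Rightarrow> bool" where
  "reduced [] = True"
| "reduced [x] = True"
| "reduced (x # y # ys) = (y \<noteq> linv x \<and> reduced (y # ys))"

definition Fn :: "nat \<Rightarrow> letter list set" where
  "Fn n = {w. set w \<subseteq> letters n \<and> reduced w}"

text \<open>Infinite reduced words; the elements of the boundary of F.\<close>
definition Binf :: "nat \<Rightarrow> (nat \<Rightarrow> letter) set" where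
  "Binf n = {W. (\<forall>k. W k \<in> letters n) \<and> (\<forall>k. W (Suc k) \<noteq> linv (W k))}"

fun freduce :: "letter list \<Rightarrow> letter list" where
  "freduce [] = []"
| "freduce (x # xs) = (case freduce xs of
       [] \<Rightarrow> [x]
     | y # ys \<Rightarrow> (if y = linv x then ys else x # y # ys))"

definition winv :: "letter list \<Rightarrow> letter list" where
  "winv w = rev (map linv w)"

definition phi :: "(nat \<Rightarrow> letter list) \<Rightarrow> letter list \<Rightarrow> letter list" where
  "phi g w = freduce (concat (map (\<lambda>x. if snd x then g (fst x) else winv (g (fst x))) w))"

definition pref :: "(nat \<Rightarrow> letter) \<Rightarrow> nat \<Rightarrow> letter list" where
  "pref W i = map W [0..<i]"

text \<open>Extension of phi to infinite words: phi(W) = lim phi(W_i), the limit taken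
letterwise (the k-th letter of phi(W) is eventually the k-th letter of phi(W_i)).\<close>
definition phi_inf :: "(nat \<Rightarrow> letter list) \<Rightarrow> (nat \<Rightarrow> letter) \<Rightarrow> nat \<Rightarrow> letter" where
  "phi_inf g W k = (THE a. \<forall>\<^sub>F i in sequentially.
       k < length (phi g (pref W i)) \<and> phi g (pref W i) ! k = a)"

datatype fbar = Fin "letter list" | Inf "nat \<Rightarrow> letter"

definition Fbar :: "nat \<Rightarrow> fbar set" where
  "Fbar n = Fin ` Fn n \<union> Inf ` Binf n"

fun phibar :: "(nat \<Rightarrow> letter list) \<Rightarrow> fbar \<Rightarrow> fbar" where
  "phibar g (Fin w) = Fin (phi g w)"
| "phibar g (Inf W) = Inf (phi_inf g W)"

fun letter_at :: "fbar \<Rightarrow> nat \<Rightarrow> letter option" where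
  "letter_at (Fin w) k = (if k < length w then Some (w ! k) else None)"
| "letter_at (Inf W) k = Some (W k)"

definition cp_len :: "fbar \<Rightarrow> fbar \<Rightarrow> enat" where
  "cp_len X Y = (if \<forall>k. letter_at X k \<noteq> None \<and> letter_at X k = letter_at Y k then \<infinity>
     else enat (LEAST k. letter_at X k = None \<or> letter_at X k \<noteq> letter_at Y k))"

definition attracting_fixed :: "nat \<Rightarrow> (nat \<Rightarrow> letter list) \<Rightarrow> (nat \<Rightarrow> letter) \<Rightarrow> bool" where
  "attracting_fixed n g W \<longleftrightarrow> W \<in> Binf n \<and> phi_inf g W = W \<and>
     filterlim (\<lambda>i. int (the_enat (cp_len (Inf W) (Fin (phi g (pref W i))))) - int i)
       at_top sequentially"

end

theory Submission imports Defs "HOL-Library.Sublist" begin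


fun cr :: "letter \<Rightarrow> letter list \<Rightarrow> letter list" where
  "cr x [] = [x]" | "cr x (y#ys) = (if y = linv x then ys else x#y#ys)"

lemma freduce_Cons: "freduce (x#xs) = cr x (freduce xs)"
  by (cases "freduce xs") auto

declare freduce.simps(2)[simp del]

lemma linv_linv[simp]: "linv (linv x) = x" by (simp add: linv_def)
lemma linv_inj[simp]: "linv x = linv y \<longleftrightarrow> x = y" by (metis linv_linv)

lemma reduced_cons: "reduced (x#xs) \<longleftrightarrow> reduced xs \<and> (xs = [] \<or> hd xs \<noteq> linv x)"
  by (cases xs) auto

lemma reduced_cr: "reduced r \<Longrightarrow> reduced (cr x r)"
  by (cases r) (auto simp: reduced_cons)

lemma reduced_freduce: "reduced (freduce xs)"
  by (induct xs) (auto simp: freduce_Cons reduced_cr)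

lemma cr_red: "reduced xs \<Longrightarrow> (xs = [] \<or> hd xs \<noteq> linv x) \<Longrightarrow> cr x xs = x # xs"
  by (cases xs) auto

lemma freduce_reduced: "reduced xs \<Longrightarrow> freduce xs = xs"
  by (induct xs) (auto simp: freduce_Cons reduced_cons cr_red)

lemma cr_cancel: "reduced u \<Longrightarrow> cr x (cr (linv x) u) = u"
  apply (cases u)
   apply simp
  subgoal for y ys by (cases ys) (auto simp: reduced_cons)
  done

lemma freduce_append: "freduce (xs @ ys) = foldr cr xs (freduce ys)"
  by (induct xs) (auto simp: freduce_Cons)

lemma reduced_foldr: "reduced w \<Longrightarrow> reduced (foldr cr xs w)"
  by (induct xs) (auto simp: reduced_cr)

lemma foldr_cr_cons: "reduced w \<Longrightarrow> foldr cr (x # r) w = foldr cr (cr x r) w"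
  by (cases r) (auto simp: cr_cancel reduced_foldr)

lemma foldr_freduce: "reduced w \<Longrightarrow> foldr cr (freduce xs) w = foldr cr xs w"
proof (induct xs)
  case (Cons x xs)
  then show ?case by (simp add: freduce_Cons foldr_cr_cons[symmetric])
qed simp

lemma freduce_idem: "freduce (freduce xs) = freduce xs"
  by (simp add: freduce_reduced reduced_freduce)

lemma freduce_left: "freduce (freduce xs @ ys) = freduce (xs @ ys)"
  by (simp add: freduce_append foldr_freduce reduced_freduce)

lemma freduce_right: "freduce (xs @ freduce ys) = freduce (xs @ ys)"
  by (simp add: freduce_append freduce_idem)

lemma length_cr: "length (cr x r) \<le> Suc (length r)"
  by (cases r) auto

lemma length_freduce: "length (freduce xs) \<le> length xs"
  by (induct xs) (auto simp: freduce_Cons intro: order_trans[OF length_cr])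

lemma set_cr: "set (cr x r) \<subseteq> insert x (set r)"
  by (cases r) auto

lemma set_freduce: "set (freduce xs) \<subseteq> set xs"
  by (induct xs) (auto simp: freduce_Cons dest: set_cr[THEN subsetD])

lemma winv_Cons: "winv (x#xs) = winv xs @ [linv x]" by (simp add: winv_def)
lemma winv_Nil[simp]: "winv [] = []" by (simp add: winv_def)
lemma winv_winv[simp]: "winv (winv xs) = xs" by (simp add: winv_def rev_map comp_def)
lemma length_winv[simp]: "length (winv xs) = length xs" by (simp add: winv_def)

lemma freduce_cancel1: "freduce (linv a # a # ys) = freduce ys"
  using cr_cancel[of "freduce ys" "linv a"] by (simp add: freduce_Cons reduced_freduce)

lemma freduce_cancel: "freduce (ws @ winv ws @ ys) = freduce ys"
proof (induct ws arbitrary: ys)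
  case (Cons a ws)
  have "freduce ((a # ws) @ winv (a#ws) @ ys) = cr a (freduce (ws @ winv ws @ (linv a # ys)))"
    by (simp add: winv_Cons freduce_Cons)
  also have "\<dots> = cr a (cr (linv a) (freduce ys))" by (simp add: Cons freduce_Cons)
  also have "\<dots> = freduce ys" by (simp add: cr_cancel reduced_freduce)
  finally show ?case .
qed simp

lemma freduce_cancel': "freduce (winv ws @ ws @ ys) = freduce ys"
  using freduce_cancel[of "winv ws"] by simp

lemma reduced_append: "reduced (xs @ ys) \<longleftrightarrow> reduced xs \<and> reduced ys \<and> (xs = [] \<or> ys = [] \<or> hd ys \<noteq> linv (last xs))"
proof (induct xs)
  case (Cons x xs)
  then show ?case by (cases xs) (auto simp: reduced_cons)
qed simp

lemma winv_Nil_iff[simp]: "winv xs = [] \<longleftrightarrow> xs = []" by (simp add: winv_def)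

lemma last_winv: "xs \<noteq> [] \<Longrightarrow> last (winv xs) = linv (hd xs)"
  by (cases xs) (auto simp: winv_def)

lemma reduced_winv: "reduced xs \<Longrightarrow> reduced (winv xs)"
proof (induct xs)
  case (Cons x xs)
  then show ?case
    by (auto simp: winv_Cons reduced_append reduced_cons last_winv)
qed simp

lemma reduced_take: "reduced xs \<Longrightarrow> reduced (take a xs)"
  using reduced_append[of "take a xs" "drop a xs"] by simp
lemma reduced_drop: "reduced xs \<Longrightarrow> reduced (drop a xs)"
  using reduced_append[of "take a xs" "drop a xs"] by simp

lemma reduced_nth: "reduced xs \<longleftrightarrow> (\<forall>j. Suc j < length xs \<longrightarrow> xs ! Suc j \<noteq> linv (xs ! j))"
proof (induct xs)
  case (Cons x xs)
  show ?case
  proof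
    assume "reduced (x#xs)"
    then show "\<forall>j. Suc j < length (x#xs) \<longrightarrow> (x#xs) ! Suc j \<noteq> linv ((x#xs) ! j)"
      using Cons by (auto simp: reduced_cons hd_conv_nth nth_Cons split: nat.split)
  next
    assume H: "\<forall>j. Suc j < length (x#xs) \<longrightarrow> (x#xs) ! Suc j \<noteq> linv ((x#xs) ! j)"
    have "reduced xs" unfolding Cons
    proof (intro allI impI)
      fix j assume "Suc j < length xs"
      then show "xs ! Suc j \<noteq> linv (xs ! j)" using H[rule_format, of "Suc j"] by simp
    qed
    moreover have "xs = [] \<or> hd xs \<noteq> linv x"
      using H[rule_format, of 0] by (cases xs) auto
    ultimately show "reduced (x#xs)" by (simp add: reduced_cons)
  qed
qed simp

fun lcpl :: "'a list \<Rightarrow> 'a list \<Rightarrow> nat" where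
  "lcpl (a#as) (b#bs) = (if a = b then Suc (lcpl as bs) else 0)"
| "lcpl _ _ = 0"

lemma lcpl_sym: "lcpl x y = lcpl y x"
  by (induct x y rule: lcpl.induct) auto

lemma lcpl_le: "lcpl x y \<le> length x" "lcpl x y \<le> length y"
  by (induct x y rule: lcpl.induct) auto

lemma lcpl_prefix: "prefix z y \<Longrightarrow> lcpl z y = length z"
  by (induct z arbitrary: y) (auto simp: prefix_def)

lemma lcpl_tree: "prefix z y \<Longrightarrow> \<not> prefix z x \<Longrightarrow> lcpl x z = lcpl x y \<and> lcpl x y < length z"
proof (induct z arbitrary: x y)
  case (Cons c zs)
  then obtain ys where y: "y = c # ys" "prefix zs ys" by (auto simp: prefix_def)
  show ?case
  proof (cases x)
    case (Cons a xs)
    then show ?thesis using Cons.hyps[of ys xs] Cons.prems y by auto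
  qed (simp add: y)
qed simp

definition wdist :: "letter list \<Rightarrow> letter list \<Rightarrow> nat" where
  "wdist x y = length (freduce (winv x @ y))"

lemma wdist_formula: "reduced x \<Longrightarrow> reduced y \<Longrightarrow> wdist x y + 2 * lcpl x y = length x + length y"
proof (induct x y rule: lcpl.induct)
  case (1 a as b bs)
  show ?case
  proof (cases "a = b")
    case True
    have "freduce (winv (a#as) @ b # bs) = freduce (winv as @ freduce (linv a # a # bs))"
      using True by (simp add: winv_Cons freduce_right)
    also have "\<dots> = freduce (winv as @ bs)" by (simp add: freduce_cancel1 freduce_right)
    finally show ?thesis using 1 True by (simp add: wdist_def reduced_cons)
  next
    case False
    have "reduced (winv as @ linv a # b # bs)"
      using 1(2,3) False
      by (auto simp: reduced_append reduced_cons reduced_winv last_winv)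
    then have "freduce (winv (a#as) @ b # bs) = winv as @ linv a # b # bs"
      by (simp add: winv_Cons freduce_reduced)
    then show ?thesis using False by (simp add: wdist_def)
  qed
qed (auto simp: wdist_def freduce_reduced reduced_winv)

lemma wdist_sym: "reduced x \<Longrightarrow> reduced y \<Longrightarrow> wdist x y = wdist y x"
  using wdist_formula[of x y] wdist_formula[of y x] lcpl_sym[of x y] by simp

lemma wdist_tree: "reduced x \<Longrightarrow> reduced y \<Longrightarrow> reduced z \<Longrightarrow> prefix z y \<Longrightarrow> \<not> prefix z x
   \<Longrightarrow> wdist x z \<le> wdist x y"
  using wdist_formula[of x y] wdist_formula[of x z] lcpl_tree[of z y x] prefix_length_le[of z y]
  by simp

lemma wdist_prefix: "reduced z \<Longrightarrow> reduced y \<Longrightarrow> prefix z y \<Longrightarrow> wdist z y + length z = length y"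
  using wdist_formula[of z y] lcpl_prefix[of z y] by simp

lemma wdist_tri: "wdist x z \<le> wdist x y + wdist y z"
proof -
  have "freduce (winv x @ z) = freduce (winv x @ freduce (y @ winv y @ z))"
    by (simp add: freduce_cancel freduce_right)
  also have "\<dots> = freduce ((winv x @ y) @ (winv y @ z))" by (simp add: freduce_right)
  also have "\<dots> = freduce (freduce (winv x @ y) @ freduce (winv y @ z))"
    by (simp add: freduce_left freduce_right)
  finally show ?thesis unfolding wdist_def
    using length_freduce[of "freduce (winv x @ y) @ freduce (winv y @ z)"] by simp
qed

lemma wdist_D: "wdist x (freduce (x @ Q)) = length (freduce Q)"
  by (simp add: wdist_def freduce_right freduce_cancel')

definition img :: "(nat \<Rightarrow> letter list) \<Rightarrow> letter \<Rightarrow> letter list" where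
  "img g a = (if snd a then g (fst a) else winv (g (fst a)))"

lemma phi_img: "phi g w = freduce (concat (map (img g) w))"
proof -
  have "(\<lambda>x. if snd x then g (fst x) else winv (g (fst x))) = img g" by (rule ext) (simp add: img_def)
  then show ?thesis by (simp add: phi_def)
qed

lemma phi_append: "phi g (A @ B) = freduce (phi g A @ concat (map (img g) B))"
  by (simp add: phi_img freduce_left)

lemma phi_Nil[simp]: "phi g [] = []" by (simp add: phi_img)



lemma pref_len[simp]: "length (pref W i) = i" by (simp add: pref_def)

lemma pref_add: "a \<le> b \<Longrightarrow> pref W b = pref W a @ map W [a..<b]"
  unfolding pref_def by (metis le_add_same_cancel1 map_append upt_add_eq_append zero_le le_Suc_ex)

lemma pref_Suc: "pref W (Suc i) = pref W i @ [W i]" by (simp add: pref_def)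

lemma reduced_pref: "W \<in> Binf n \<Longrightarrow> reduced (pref W i)"
  by (auto simp: reduced_nth Binf_def pref_def nth_append simp del: upt_Suc)

lemma set_pref: "W \<in> Binf n \<Longrightarrow> set (pref W i) \<subseteq> letters n"
  by (auto simp: Binf_def pref_def)

lemma len_concat_img: "set R \<subseteq> letters n \<Longrightarrow> \<forall>a\<in>letters n. length (img g a) \<le> M
   \<Longrightarrow> length (concat (map (img g) R)) \<le> length R * M"
  by (induct R) auto

lemma reduced_phi: "reduced (phi g w)" by (simp add: phi_img reduced_freduce)

lemma core:
  assumes W: "W \<in> Binf n"
  and imgM: "\<forall>a\<in>letters n. length (img g a) \<le> M"
  and K: "\<forall>w\<in>Fn n. length (phi g w) \<le> 2*M \<longrightarrow> length w \<le> K"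
  and mk: "prefix (pref W m) (phi g (pref W k))" "Suc k + (K+1)*M < m"
  and red: "reduced (pref W k @ V)" "set V \<subseteq> letters n"
  shows "prefix (pref W (Suc k)) (phi g (pref W k @ V))"
proof (rule ccontr)
  define z where "z = pref W (Suc k)"
  define x where "x j = phi g (pref W k @ take j V)" for j
  define y where "y i = phi g (pref W i)" for i
  have redz: "reduced z" using W by (simp add: z_def reduced_pref)
  have redx: "reduced (x j)" for j by (simp add: x_def reduced_phi)
  have redy: "reduced (y i)" for i by (simp add: y_def reduced_phi)
  have "prefix z (pref W m)" unfolding z_def using mk(2) pref_add[of "Suc k" m W] by simp
  then have zy: "prefix z (y k)" using mk(1) unfolding y_def using prefix_order.trans by blast
  assume "\<not> prefix (pref W (Suc k)) (phi g (pref W k @ V))"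
  then have nz: "\<not> prefix z (x (length V))" by (simp add: z_def x_def)
  define j where "j = (LEAST j. \<not> prefix z (x j))"
  have j1: "\<not> prefix z (x j)" unfolding j_def using nz by (rule LeastI)
  have j2: "j \<le> length V" unfolding j_def using nz by (rule Least_le)
  have "x 0 = y k" by (simp add: x_def y_def)
  then have "j \<noteq> 0" using j1 zy by (metis)
  then obtain j' where jj: "j = Suc j'" by (cases j) auto
  have j3: "prefix z (x j')" using not_less_Least[of j' "\<lambda>j. \<not> prefix z (x j)"] jj j_def by auto
  have j'l: "j' < length V" using jj j2 by simp
  have Vl: "V ! j' \<in> letters n" using red(2) j'l by auto
  have xj: "x j = freduce (x j' @ img g (V ! j'))"
    unfolding x_def jj using j'l
    by (simp add: take_Suc_conv_app_nth phi_append[of g "pref W k @ take j' V" "[V ! j']", simplified])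
  have d1: "wdist (x j) z \<le> M"
  proof -
    have "wdist (x j) z \<le> wdist (x j) (x j')" using wdist_tree[OF redx redx redz j3 j1] .
    also have "\<dots> = wdist (x j') (x j)" by (simp add: wdist_sym redx)
    also have "\<dots> = length (freduce (img g (V ! j')))" by (simp add: xj wdist_D)
    also have "\<dots> \<le> M" using length_freduce imgM Vl order_trans by blast
    finally show ?thesis .
  qed
  define i where "i = (LEAST i. prefix z (y i))"
  have i1: "prefix z (y i)" unfolding i_def using zy by (rule LeastI)
  have i2: "i \<le> k" unfolding i_def using zy by (rule Least_le)
  have "y 0 = []" by (simp add: y_def pref_def)
  moreover have "z \<noteq> []" by (simp add: z_def pref_def)
  ultimately have "i \<noteq> 0" using i1 by (metis Nil_is_append_conv prefix_def)
  then obtain p where ip: "i = Suc p" by (cases i) auto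
  have i3: "\<not> prefix z (y p)" using not_less_Least[of p "\<lambda>i. prefix z (y i)"] ip i_def by auto
  have Wl: "W p \<in> letters n" using W by (simp add: Binf_def)
  have yi: "y i = freduce (y p @ img g (W p))"
    unfolding y_def ip by (simp add: pref_Suc phi_append)
  have d2: "wdist (y p) z \<le> M"
  proof -
    have "wdist (y p) z \<le> wdist (y p) (y i)" using wdist_tree[OF redy redy redz i1 i3] .
    also have "\<dots> = length (freduce (img g (W p)))" by (simp add: yi wdist_D)
    also have "\<dots> \<le> M" using length_freduce imgM Wl order_trans by blast
    finally show ?thesis .
  qed
  have d3: "wdist (y p) (x j) \<le> 2 * M"
    using wdist_tri[of "y p" "x j" z] d1 d2 wdist_sym[OF redz redx, of j] by simp
  define R where "R = map W [p..<k] @ take j V"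
  have pk: "p \<le> k" using ip i2 by simp
  have eqR: "pref W k @ take j V = pref W p @ R" unfolding R_def using pref_add[OF pk, of W] by simp
  have "x j = freduce (y p @ concat (map (img g) R))" unfolding x_def y_def eqR by (rule phi_append)
  then have "wdist (y p) (x j) = length (phi g R)" by (simp add: wdist_D phi_img)
  moreover have "R \<in> Fn n"
  proof -
    have "reduced (pref W k @ take j V)"
      using reduced_take[OF red(1), of "k + j"] by simp
    then have "reduced R" unfolding eqR by (simp add: reduced_append)
    moreover have "set R \<subseteq> letters n" unfolding R_def using W red(2) set_take_subset[of j V]
      by (auto simp: Binf_def)
    ultimately show ?thesis by (simp add: Fn_def)
  qed
  ultimately have "length R \<le> K" using K d3 by auto
  then have kp: "k - p \<le> K" by (simp add: R_def)
  have "y k = freduce (y p @ concat (map (img g) (map W [p..<k])))"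
    unfolding y_def using pref_add[OF pk, of W] by (simp add: phi_append)
  then have "wdist (y p) (y k) = length (freduce (concat (map (img g) (map W [p..<k]))))"
    by (simp add: wdist_D)
  also have "\<dots> \<le> length (map W [p..<k]) * M"
    using length_freduce len_concat_img[of "map W [p..<k]" n g M] imgM W order_trans
    by (fastforce simp: Binf_def)
  also have "\<dots> \<le> K * M" using kp by simp
  finally have d4: "wdist (y p) (y k) \<le> K * M" .
  have "wdist z (y k) \<le> wdist z (y p) + wdist (y p) (y k)" by (rule wdist_tri)
  also have "\<dots> \<le> M + K * M" using d2 d4 wdist_sym[OF redz redy, of p] by simp
  finally have d5: "wdist z (y k) \<le> M + K * M" .
  have "wdist z (y k) + Suc k = length (y k)" using wdist_prefix[OF redz redy zy] by (simp add: z_def)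
  moreover have "m \<le> length (y k)" using mk(1) prefix_length_le unfolding y_def by fastforce
  ultimately show False using d5 mk(2) by simp
qed



lemma cpF: "cp_len (Inf W) (Fin w) = enat (LEAST j. \<not> (j < length w \<and> w ! j = W j))"
proof -
  have "\<not> (\<forall>k. letter_at (Inf W) k \<noteq> None \<and> letter_at (Inf W) k = letter_at (Fin w) k)"
    by (auto intro: exI[of _ "length w"])
  moreover have "(\<lambda>k. letter_at (Inf W) k = None \<or> letter_at (Inf W) k \<noteq> letter_at (Fin w) k)
      = (\<lambda>j. \<not> (j < length w \<and> w ! j = W j))" by (rule ext) auto
  ultimately show ?thesis unfolding cp_len_def by simp
qed

lemma cp_prefix:
  assumes "cp_len (Inf W) (Fin w) = enat k" shows "prefix (pref W k) w"
proof -
  let ?P = "\<lambda>j. \<not> (j < length w \<and> w ! j = W j)"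
  have k: "k = (LEAST j. ?P j)" using assms cpF by simp
  have kl: "k \<le> length w" unfolding k by (rule Least_le) simp
  have "\<forall>j<k. j < length w \<and> w ! j = W j" using not_less_Least[of _ ?P] k by blast
  then have "take k w = pref W k" using kl by (auto intro!: nth_equalityI simp: pref_def)
  then show ?thesis by (metis append_take_drop_id prefix_def)
qed

lemma cp_geF:
  assumes "\<forall>j<m. j < length w \<and> w ! j = W j" shows "enat m \<le> cp_len (Inf W) (Fin w)"
proof -
  let ?P = "\<lambda>j. \<not> (j < length w \<and> w ! j = W j)"
  have "?P (length w)" by simp
  then have "?P (LEAST j. ?P j)" by (rule LeastI)
  then have "m \<le> (LEAST j. ?P j)" using assms by (meson not_le)
  then show ?thesis by (simp add: cpF)
qed

lemma cp_geI:
  assumes "\<forall>j<m. U j = W j" shows "enat m \<le> cp_len (Inf W) (Inf U)"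
proof (cases "\<forall>k. W k = U k")
  case True then show ?thesis by (simp add: cp_len_def)
next
  case False
  then obtain k0 where "W k0 \<noteq> U k0" by blast
  then have "W (LEAST k. W k \<noteq> U k) \<noteq> U (LEAST k. W k \<noteq> U k)" by (rule LeastI)
  then have "m \<le> (LEAST k. W k \<noteq> U k)" using assms by (metis not_le)
  then show ?thesis using False by (simp add: cp_len_def)
qed

lemma cp_Inf:
  assumes "U \<noteq> W" shows "\<exists>k. cp_len (Inf W) (Inf U) = enat k \<and> (\<forall>j<k. U j = W j)"
proof -
  have ne: "\<not> (\<forall>k. letter_at (Inf W) k \<noteq> None \<and> letter_at (Inf W) k = letter_at (Inf U) k)"
    using assms by (simp add: fun_eq_iff) metis
  have eqf: "(\<lambda>k. letter_at (Inf W) k = None \<or> letter_at (Inf W) k \<noteq> letter_at (Inf U) k)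
     = (\<lambda>k. W k \<noteq> U k)" by (rule ext) simp
  have c: "cp_len (Inf W) (Inf U) = enat (LEAST k. W k \<noteq> U k)"
    unfolding cp_len_def using ne eqf by simp
  have "\<forall>j<(LEAST k. W k \<noteq> U k). U j = W j"
    using not_less_Least[of _ "\<lambda>k. W k \<noteq> U k"] by metis
  then show ?thesis using c by blast
qed

lemma pref_nth: "j < i \<Longrightarrow> pref W i ! j = W j" by (simp add: pref_def)

lemma prefix_nth: "prefix (pref W m) v \<Longrightarrow> \<forall>j<m. j < length v \<and> v ! j = W j"
proof (intro allI impI)
  fix j assume "prefix (pref W m) v" "j < m"
  then obtain r where "v = pref W m @ r" "j < length (pref W m)" by (auto simp: prefix_def)
  then show "j < length v \<and> v ! j = W j" by (simp add: nth_append pref_nth)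
qed

lemma set_winv: "set (winv l) = linv ` set l" by (simp add: winv_def)

theorem lemma2p2:
  fixes n :: nat and g :: "nat \<Rightarrow> letter list" and W :: "nat \<Rightarrow> letter"
  assumes "\<forall>i<n. g i \<in> Fn n"
    and "inj_on (phi g) (Fn n)"
    and "attracting_fixed n g W"
  shows "\<exists>i0::nat. \<forall>W'\<in>Fbar n. W' \<noteq> Inf W \<and> enat i0 \<le> cp_len (Inf W) W' \<longrightarrow>
           cp_len (Inf W) (phibar g W') > cp_len (Inf W) W'"
proof -
  have W: "W \<in> Binf n" and lim: "filterlim (\<lambda>i. int (the_enat (cp_len (Inf W) (Fin (phi g (pref W i))))) - int i)
       at_top sequentially" using assms(3) by (auto simp: attracting_fixed_def)
  define M where "M = (\<Sum>i<n. length (g i))"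
  have imgM: "\<forall>a\<in>letters n. length (img g a) \<le> M"
  proof
    fix a assume "a \<in> letters n"
    then have "fst a \<in> {..<n}" by (simp add: letters_def)
    then have "length (g (fst a)) \<le> M" unfolding M_def by (rule member_le_sum) auto
    then show "length (img g a) \<le> M" by (simp add: img_def)
  qed
  have imgS: "set (img g a) \<subseteq> letters n" if "a \<in> letters n" for a
  proof -
    have "set (g (fst a)) \<subseteq> letters n" using that assms(1) by (auto simp: letters_def Fn_def)
    moreover have "linv ` letters n \<subseteq> letters n" by (auto simp: letters_def linv_def)
    ultimately show ?thesis by (auto simp: img_def set_winv)
  qed
  have phiS: "set (phi g w) \<subseteq> letters n" if "w \<in> Fn n" for w
  proof -
    have "set (concat (map (img g) w)) \<subseteq> letters n" using that imgS by (auto simp: Fn_def)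
    then show ?thesis unfolding phi_img using set_freduce by blast
  qed
  define S where "S = {w \<in> Fn n. length (phi g w) \<le> 2*M}"
  have finL: "finite (letters n)"
  proof -
    have "letters n = {..<n} \<times> UNIV" by (auto simp: letters_def)
    then show ?thesis by simp
  qed
  have "phi g ` S \<subseteq> {v. set v \<subseteq> letters n \<and> length v \<le> 2*M}" using phiS by (auto simp: S_def)
  then have "finite (phi g ` S)" using finite_lists_length_le[OF finL] finite_subset by blast
  moreover have "inj_on (phi g) S" using assms(2) by (rule inj_on_subset) (auto simp: S_def)
  ultimately have "finite S" by (rule finite_imageD)
  then have "finite (length ` S)" by simp
  then obtain K where K0: "\<forall>l\<in>length ` S. l \<le> K" using finite_nat_set_iff_bounded_le by blast
  have K: "\<forall>w\<in>Fn n. length (phi g w) \<le> 2*M \<longrightarrow> length w \<le> K" using K0 by (auto simp: S_def)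
  have "eventually (\<lambda>i. int (Suc ((K+1)*M + 1)) \<le>
     int (the_enat (cp_len (Inf W) (Fin (phi g (pref W i))))) - int i) sequentially"
    using lim by (simp add: filterlim_at_top)
  then obtain i0 where i0: "\<And>k. k \<ge> i0 \<Longrightarrow> int (Suc ((K+1)*M + 1)) \<le>
     int (the_enat (cp_len (Inf W) (Fin (phi g (pref W k))))) - int k"
    by (auto simp: eventually_sequentially)
  have coreI: "prefix (pref W (Suc k)) (phi g (pref W k @ V))"
    if k: "k \<ge> i0" and red: "reduced (pref W k @ V)" "set V \<subseteq> letters n" for k V
  proof -
    obtain m where m: "cp_len (Inf W) (Fin (phi g (pref W k))) = enat m" using cpF by blast
    have h: "int (Suc ((K+1)*M + 1)) \<le> int m - int k" using i0[OF k] m by (simp only: the_enat.simps)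
    have "int (Suc ((K+1)*M + 1) + k) \<le> int m" using h unfolding of_nat_add by linarith
    then have "Suc ((K+1)*M + 1) + k \<le> m" by (simp only: of_nat_le_iff)
    then have "Suc k + (K+1)*M < m" by simp
    moreover have "prefix (pref W m) (phi g (pref W k))" using cp_prefix[OF m] .
    ultimately show ?thesis using core[OF W imgM K _ _ red] by blast
  qed
  show ?thesis
  proof (intro exI ballI impI)
    fix W' assume W'F: "W' \<in> Fbar n" and H: "W' \<noteq> Inf W \<and> enat i0 \<le> cp_len (Inf W) W'"
    show "cp_len (Inf W) (phibar g W') > cp_len (Inf W) W'"
    proof (cases W')
      case (Fin w)
      then have w: "w \<in> Fn n" using W'F by (auto simp: Fbar_def)
      obtain k where k: "cp_len (Inf W) (Fin w) = enat k" using cpF by blast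
      have ki: "k \<ge> i0" using H Fin k by simp
      have "prefix (pref W k) w" using cp_prefix[OF k] .
      then obtain V where wV: "w = pref W k @ V" by (auto simp: prefix_def)
      have "reduced (pref W k @ V)" "set V \<subseteq> letters n" using w wV by (auto simp: Fn_def)
      from coreI[OF ki this] have "prefix (pref W (Suc k)) (phi g w)" using wV by simp
      then have "enat (Suc k) \<le> cp_len (Inf W) (Fin (phi g w))" by (intro cp_geF prefix_nth)
      moreover have "enat k < enat (Suc k)" by simp
      ultimately show ?thesis using Fin k by (metis order_less_le_trans phibar.simps(1))
    next
      case (Inf U)
      then have U: "U \<in> Binf n" using W'F by (auto simp: Fbar_def)
      have "U \<noteq> W" using H Inf by auto
      then obtain k where k: "cp_len (Inf W) (Inf U) = enat k" "\<forall>j<k. U j = W j"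
        using cp_Inf by blast
      have ki: "k \<ge> i0" using H Inf k by simp
      have ev: "eventually (\<lambda>i. prefix (pref W (Suc k)) (phi g (pref U i))) sequentially"
        unfolding eventually_sequentially
      proof (intro exI allI impI)
        fix i assume ik: "k \<le> i"
        have "pref U k = pref W k" using k(2) by (simp add: pref_def)
        then have eq: "pref U i = pref W k @ map U [k..<i]" using pref_add[OF ik, of U] by simp
        have "reduced (pref W k @ map U [k..<i])" using reduced_pref[OF U, of i] eq by simp
        moreover have "set (map U [k..<i]) \<subseteq> letters n" using U by (auto simp: Binf_def)
        ultimately show "prefix (pref W (Suc k)) (phi g (pref U i))" using coreI[OF ki] eq by simp
      qed
      have "phi_inf g U j = W j" if jk: "j < Suc k" for j
      proof -
        let ?P = "\<lambda>a i. j < length (phi g (pref U i)) \<and> phi g (pref U i) ! j = a"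
        have evW: "eventually (?P (W j)) sequentially"
          using ev by (rule eventually_mono) (use jk prefix_nth in blast)
        show ?thesis unfolding phi_inf_def
        proof (rule the_equality)
          fix a assume "eventually (?P a) sequentially"
          then have "eventually (\<lambda>i. ?P a i \<and> ?P (W j) i) sequentially"
            using evW by (rule eventually_conj)
          then obtain N where "\<forall>i\<ge>N. ?P a i \<and> ?P (W j) i" by (auto simp: eventually_sequentially)
          then show "a = W j" by auto
        qed (rule evW)
      qed
      then have "enat (Suc k) \<le> cp_len (Inf W) (Inf (phi_inf g U))" by (intro cp_geI) auto
      moreover have "enat k < enat (Suc k)" by simp
      ultimately show ?thesis using Inf k by (metis order_less_le_trans phibar.simps(2))
    qed
  qed
qed


end
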